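(* Let $0<q<1$ and let $\alpha,\beta>-1$ be real. For every integer $n\ge 1$ and every $x\in\mathbb C$, \begin{align*} &(1-2xq^{\alpha+1/2}+q^{2\alpha+1})(1+2xq^{\beta+1/2}+q^{2\beta+1})\,P_{n-1}^{(\alpha+1,\beta+1)}(x;q)\\ &=\frac{(1+q^{\alpha+\beta+n})(1+q^{\alpha+\beta+n+1})(1+q^{\alpha+n})(1+q^{\beta+n})(1-q^{\alpha+n})(1-q^{\beta+n})}{(1-q^{2n+\alpha+\beta})(1-q^{2n+\alpha+\beta+1})}\,P_{n-1}^{(\alpha,\beta)}(x;q)\\ &\quad+\frac{(1+q^{\alpha+\beta+n+1})(1+q^{\alpha+\beta+2n+1})(1+q^{n})^2(1-q^{n})(1-q^{\alpha-\beta})}{(1-q^{2n+\alpha+\beta})(1-q^{2n+\alpha+\beta+2})}\,q^{\beta}\,P_{n}^{(\alpha,\beta)}(x;q)\\ &\quad-\frac{(1+q^{n})^2(1+q^{n+1})^2(1-q^{n})(1-q^{n+1})}{(1-q^{2n+\alpha+\beta+1})(1-q^{2n+\alpha+\beta+2})}\,q^{\alpha+\beta}\,P_{n+1}^{(\alpha,\beta)}(x;q). \end{align*}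
   Context: Notation: for $a\in\mathbb C$, $(a;q)_0=1$, $(a;q)_n=\prod_{j=0}^{n-1}(1-aq^j)$, $(a;q)_\infty=\prod_{j\ge0}(1-aq^j)$, and $(a_1,\dots,a_m;q)_n=\prod_{k=1}^m(a_k;q)_n$. The basic hypergeometric series is ${}_r\phi_s(a_1,\dots,a_r;b_1,\dots,b_s;q,z)=\sum_{k\ge0}\frac{(a_1,\dots,a_r;q)_k}{(q,b_1,\dots,b_s;q)_k}\big[(-1)^kq^{k(k-1)/2}\big]^{1+s-r}z^k$. For $x=\cos\theta$, the continuous $q$-Jacobi polynomials in Rahman's normalization are $$P_n^{(\alpha,\beta)}(x;q)=\frac{(q^{\alpha+1},-q^{\beta+1};q)_n}{(q,-q;q)_n}\,{}_4\phi_3\!\left(q^{-n},q^{n+\alpha+\beta+1},q^{1/2}e^{i\theta},q^{1/2}e^{-i\theta};\,q^{\alpha+1},-q^{\beta+1},-q;\,q,q\right),$$ a polynomial of degree $n$ in $x$ (the terminating series depends on $\theta$ only through $x$, so it extends to all $x\in\mathbb C$). *)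

theory Defs
  imports Complex_Main
begin

definition qpoch :: "complex \<Rightarrow> complex \<Rightarrow> nat \<Rightarrow> complex" where
  "qpoch a q n = (\<Prod>j<n. 1 - a * q ^ j)"

text \<open>For x = cos theta:
  (q^(1/2) e^(i theta), q^(1/2) e^(-i theta); q)_k = prod_{j<k} (1 - 2 x q^(j+1/2) + q^(2j+1)).
  This is the polynomial-in-x form used to extend the terminating 4phi3 to all complex x.\<close>
definition qpoch_cos :: "complex \<Rightarrow> real \<Rightarrow> nat \<Rightarrow> complex" where
  "qpoch_cos x q k = (\<Prod>j<k. 1 - 2 * x * of_real (q powr (real j + 1/2)) + of_real (q powr (2 * real j + 1)))"

text \<open>Continuous q-Jacobi polynomials, Rahman's normalization. The 4phi3 has r = 4, s = 3,
  so the factor [(-1)^k q^(k(k-1)/2)]^(1+s-r) equals 1; the series terminates at k = n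
  because (q^(-n);q)_k = 0 for k > n.\<close>
definition qJacobiP :: "real \<Rightarrow> real \<Rightarrow> real \<Rightarrow> nat \<Rightarrow> complex \<Rightarrow> complex" where
  "qJacobiP \<alpha> \<beta> q n x =
     (qpoch (of_real (q powr (\<alpha> + 1))) (of_real q) n * qpoch (- of_real (q powr (\<beta> + 1))) (of_real q) n)
     / (qpoch (of_real q) (of_real q) n * qpoch (- of_real q) (of_real q) n)
     * (\<Sum>k\<le>n.
         qpoch (of_real (q powr (- real n))) (of_real q) k
         * qpoch (of_real (q powr (real n + \<alpha> + \<beta> + 1))) (of_real q) k
         * qpoch_cos x q k
         / (qpoch (of_real q) (of_real q) k
            * qpoch (of_real (q powr (\<alpha> + 1))) (of_real q) k
            * qpoch (- of_real (q powr (\<beta> + 1))) (of_real q) k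
            * qpoch (- of_real q) (of_real q) k)
         * of_real q ^ k)"

end

theory Submission
  imports Defs
begin

definition rq :: "real \<Rightarrow> real \<Rightarrow> nat \<Rightarrow> real" where
  "rq c q k = (\<Prod>j<k. 1 - c * q ^ j)"

lemma rq_0[simp]: "rq c q 0 = 1" by (simp add: rq_def)
lemma rq_Suc: "rq c q (Suc k) = rq c q k * (1 - c * q ^ k)"
  by (simp add: rq_def)
lemma rq_Suc': "rq c q (Suc k) = (1 - c) * rq (c * q) q k"
proof (induction k)
  case 0 then show ?case by (simp add: rq_Suc)
next
  case (Suc k)
  have "rq c q (Suc (Suc k)) = rq c q (Suc k) * (1 - c * q ^ Suc k)" by (rule rq_Suc)
  also have "\<dots> = (1 - c) * (rq (c * q) q k * (1 - c * q * q ^ k))" using Suc by (simp add: mult_ac)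
  also have "\<dots> = (1 - c) * rq (c * q) q (Suc k)" by (simp add: rq_Suc)
  finally show ?case .
qed

lemma rq_pos: assumes "0 < q" "q \<le> 1" "\<bar>c\<bar> < 1" shows "rq c q k > 0"
proof -
  have "0 < 1 - c * q ^ j" for j
  proof -
    have "\<bar>c * q ^ j\<bar> \<le> \<bar>c\<bar>" using assms by (simp add: abs_mult power_le_one mult_left_le)
    then show "0 < 1 - c * q ^ j" using assms by (smt (verit) abs_ge_self)
  qed
  then show ?thesis unfolding rq_def by (simp add: prod_pos)
qed

lemma rq_zero: assumes "0 < q" "m < k" shows "rq (inverse (q ^ m)) q k = 0"
  unfolding rq_def using assms by (intro prod_zero) (auto intro!: bexI[of _ m])

lemma qpoch_of_real: "qpoch (of_real c) (of_real q) k = of_real (rq c q k)"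
  by (simp add: qpoch_def rq_def)
lemma qpoch_of_real_neg: "qpoch (- of_real c) (of_real q) k = of_real (rq (-c) q k)"
  by (simp add: qpoch_def rq_def)

definition preg :: "real \<Rightarrow> real \<Rightarrow> real \<Rightarrow> nat \<Rightarrow> real" where
  "preg a b q m = rq (a*q) q m * rq (b*q) q m / (rq q q m * rq (-q) q m)"
definition tg :: "real \<Rightarrow> real \<Rightarrow> real \<Rightarrow> nat \<Rightarrow> nat \<Rightarrow> real" where
  "tg a b q m k = rq (inverse (q^m)) q k * rq (-(a*b*q^m*q)) q k * q^k
      / (rq q q k * rq (a*q) q k * rq (b*q) q k * rq (-q) q k)"
definition Cg :: "real \<Rightarrow> real \<Rightarrow> real \<Rightarrow> nat \<Rightarrow> nat \<Rightarrow> real" where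
  "Cg a b q m k = preg a b q m * tg a b q m k"
definition Pg :: "real \<Rightarrow> real \<Rightarrow> real \<Rightarrow> nat \<Rightarrow> complex \<Rightarrow> complex" where
  "Pg a b q m x = (\<Sum>k\<le>m. of_real (Cg a b q m k) * qpoch_cos x q k)"

lemma Cg_zero: assumes "0 < q" "m < k" shows "Cg a b q m k = 0"
  using rq_zero[OF assms] by (simp add: Cg_def tg_def)

lemma Cg_sym: "Cg a b q m k = Cg b a q m k"
  by (simp add: Cg_def tg_def preg_def mult_ac)
lemma Pg_sym: "Pg a b q m x = Pg b a q m x"
  unfolding Pg_def using Cg_sym by simp

lemma qJacobiP_Pg:
  assumes "0 < q"
  shows "qJacobiP \<alpha> \<beta> q m x = Pg (q powr \<alpha>) (- (q powr \<beta>)) q m x"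
proof -
  have e1: "q powr (\<alpha>+1) = q powr \<alpha> * q" using assms by (simp add: powr_add)
  have e2: "q powr (\<beta>+1) = q powr \<beta> * q" using assms by (simp add: powr_add)
  have e3: "q powr (- real m) = inverse (q ^ m)" using assms by (simp add: powr_minus powr_realpow)
  have e4: "q powr (real m + \<alpha> + \<beta> + 1) = - (q powr \<alpha> * - (q powr \<beta>) * q ^ m * q)"
    using assms by (simp add: powr_add powr_realpow mult_ac)
  show ?thesis
    unfolding qJacobiP_def Pg_def Cg_def tg_def preg_def
    apply (simp only: e1 e2 e3 e4 qpoch_of_real qpoch_of_real_neg of_real_minus[symmetric])
    unfolding sum_distrib_left
    apply (rule sum.cong, simp)
    apply (simp add: of_real_mult of_real_divide of_real_power)
    done
qed


lemma core_poly:
  fixes q a b N I :: real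
  shows "(1+a*b*q^2*N^2) * (N - I)*(1+a*b*N*q^2*I)*(q*I - a) + a*N*(1+a*b*q^2*N^2)*((1-q*I)*(1+q*I)*(1-b*q*I))
   = (1+a*q*N)*(1-a*b*q*N)*(N-I)*(1+a*b*N*q)*q*I + (- a*(1+q*N)*(1-b*q*N)*(q*N-1)*(1+a*b*N*q^2*I)*I)"
  by algebra

definition lam :: "real \<Rightarrow> real \<Rightarrow> real \<Rightarrow> nat \<Rightarrow> real" where
  "lam a b q m = (1-a*q^(m+1))*(1+a*q^(m+1))*(1-a*b*q^(m+1))/(1+a*b*(q^(m+1))^2)"
definition mu :: "real \<Rightarrow> real \<Rightarrow> real \<Rightarrow> nat \<Rightarrow> real" where
  "mu a b q m = -a*(1-q^(m+1))*(1+q^(m+1))^2/(1+a*b*(q^(m+1))^2)"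

lemma small_prod: fixes q c :: real assumes "0 < q" "q < 1" "\<bar>c\<bar> * q < 1" shows "1 - c*q*q^k \<noteq> 0"
proof -
  have k1: "q^k \<le> 1" using power_le_one[of q k] assms by simp
  have k2: "q^k \<ge> 0" using assms by simp
  note k = k1 k2
  have "\<bar>c*q*q^k\<bar> = (\<bar>c\<bar>*q)*q^k" using assms by (simp add: abs_mult)
  also have "\<dots> \<le> \<bar>c\<bar>*q" using k assms by (simp add: mult_left_le)
  finally have "\<bar>c*q*q^k\<bar> \<le> \<bar>c\<bar>*q" .
  then show ?thesis using assms by auto
qed

lemma A1g: fixes p c d T e N f q S u g I \<Delta> :: real
  assumes "d\<noteq>0" "N\<noteq>0" "S\<noteq>0" "u\<noteq>0" "q\<noteq>0" "I\<noteq>0" "\<Delta>\<noteq>0"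
  shows "p*c/d * (T*(e/N)*f*q/(S*u)) * (u*(g/(q*I))) = p*T*c/(d*\<Delta>*N*S*I) * (\<Delta>*e*f*g)"
  using assms by (simp add: field_simps)
lemma A2g: fixes p c d T N q S I \<Delta> a :: real
  assumes "d\<noteq>0" "N\<noteq>0" "S\<noteq>0" "q\<noteq>0" "I\<noteq>0" "\<Delta>\<noteq>0"
  shows "p*c/d * T * (a/I) = p*T*c/(d*\<Delta>*N*S*I) * (a*N*\<Delta>*S)"
  using assms by (simp add: field_simps)
lemma A3g: fixes p c d T e N q S I \<Delta> h k l :: real
  assumes "d\<noteq>0" "N\<noteq>0" "S\<noteq>0" "q\<noteq>0" "I\<noteq>0" "\<Delta>\<noteq>0"
  shows "c*h*k/\<Delta> * (p*(T*(e/N)*l*q/(S*d))) = p*T*c/(d*\<Delta>*N*S*I) * (h*k*e*l*q*I)"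
  using assms by (simp add: field_simps)
lemma A4g: fixes p c d T N q S I \<Delta> a w v z r f :: real
  assumes "d\<noteq>0" "N\<noteq>0" "S\<noteq>0" "q\<noteq>0" "I\<noteq>0" "\<Delta>\<noteq>0" "w\<noteq>0" "v\<noteq>0"
  shows "(-a*w*v^2/\<Delta>) * (p*c*z/(w*v) * (T*(r/(q*N))*f*q/(S*d))) = p*T*c/(d*\<Delta>*N*S*I) * (-a*v*z*r*f*I)"
  using assms by (simp add: field_simps power2_eq_square)

lemma coef_step:
  assumes q0: "0 < q" and q1: "q < 1" and ha: "\<bar>a\<bar> * q < 1" and hb: "\<bar>b\<bar> * q < 1"
  shows "Cg (a*q) b q m (Suc i) * ((1-a*q^(Suc i+1))*(1-a/q^(Suc i))) + Cg (a*q) b q m i * (a/q^i)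
       = lam a b q m * Cg a b q m (Suc i) + mu a b q m * Cg a b q (Suc m) (Suc i)"
proof -
  define N where "N = q^m"
  define I where "I = q^i"
  define X where "X = rq (inverse N) q i"
  define Y where "Y = rq (-(a*b*N*q^2)) q i"
  define D1 where "D1 = rq q q i"
  define D2 where "D2 = rq (-q) q i"
  define Da where "Da = rq (a*q*q) q i"
  define Db where "Db = rq (b*q) q i"
  define p where "p = preg a b q m"
  define T0 where "T0 = X*Y*I/(D1*Da*Db*D2)"
  define S where "S = (1-q*I)*(1+q*I)*(1-b*q*I)"
  define \<Delta> where "\<Delta> = 1+a*b*q^2*N^2"
  have N0: "N > 0" "N \<le> 1" using q0 q1 by (auto simp: N_def power_le_one)
  have I0: "I > 0" "I \<le> 1" using q0 q1 by (auto simp: I_def power_le_one)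
  have le: "q*I \<le> q" "q*N \<le> q" using I0 N0 q0 by (auto simp: mult_left_le)
  have qI: "q*I < 1" "q*I > 0" using le(1) q0 q1 I0 by (linarith, simp)
  have qN: "q*N < 1" "q*N > 0" using le(2) q0 q1 N0 by (linarith, simp)
  have nz1: "1 - q*I \<noteq> 0" "1 + q*I \<noteq> 0" "1 - q*N \<noteq> 0" "1 + q*N \<noteq> 0" using qI qN by auto
  have nz2: "1 - b*q*I \<noteq> 0" using small_prod[OF q0 q1 hb, of i] by (simp add: I_def)
  have nz3: "1 - a*q*q*I \<noteq> 0" using small_prod[of q "a*q" i] q0 q1 ha
    by (simp add: I_def abs_mult) (smt (verit, best) mult_left_le_one_le mult_nonneg_nonneg abs_ge_zero)
  have "a*q \<le> \<bar>a\<bar>*q" using q0 by (simp add: mult_right_mono)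
  then have nz4: "1 - a*q \<noteq> 0" using ha by linarith
  have "\<bar>a*b*q^2*N^2\<bar> < 1"
  proof -
    have "\<bar>a*b*q^2*N^2\<bar> = (\<bar>a\<bar>*q)*(\<bar>b\<bar>*q)*N^2" using q0 by (simp add: abs_mult power2_eq_square)
    also have "\<dots> \<le> (\<bar>a\<bar>*q)*(\<bar>b\<bar>*q)"
    proof (rule mult_left_le)
      show "N^2 \<le> 1" using N0 power_le_one[of N 2] by simp
      show "0 \<le> \<bar>a\<bar> * q * (\<bar>b\<bar> * q)" using q0 by simp
    qed
    also have "\<dots> < 1" using ha hb by (smt (verit) mult_le_one mult_nonneg_nonneg abs_ge_zero q0 mult_strict_mono)
    finally show ?thesis .
  qed
  then have nzD: "\<Delta> \<noteq> 0" unfolding \<Delta>_def by auto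
  have aq: "\<bar>a*q\<bar> < 1" "\<bar>b*q\<bar> < 1" using ha hb q0 by (simp_all add: abs_mult)
 have aqq0: "\<bar>a*q*q\<bar> = \<bar>a*q\<bar>*q" using q0 by (simp add: abs_mult)
  have "\<bar>a*q\<bar>*q \<le> \<bar>a*q\<bar>" using q1 by (simp add: mult_left_le)
  then have aqq: "\<bar>a*q*q\<bar> < 1" using aqq0 aq by linarith
  have Dpos: "D1 > 0" "D2 > 0" "Da > 0" "Db > 0"
    unfolding D1_def D2_def Da_def Db_def using q0 q1 aq aqq by (auto intro!: rq_pos)
  have Sn: "S \<noteq> 0" unfolding S_def using nz1 nz2 by simp
  have pa: "preg (a*q) b q m = p * (1-a*q*N)/(1-a*q)"
  proof -
    have "rq (a*q) q (Suc m) = rq (a*q) q m * (1 - a*q*N)" by (simp add: rq_Suc N_def)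
    moreover have "rq (a*q) q (Suc m) = (1 - a*q) * rq (a*q*q) q m" by (rule rq_Suc')
    ultimately have "rq (a*q*q) q m = rq (a*q) q m * (1 - a*q*N) / (1-a*q)" using nz4
      by (simp add: field_simps)
    then show ?thesis unfolding p_def preg_def by (simp add: mult_ac)
  qed
  have pS: "preg a b q (Suc m) = p*(1-a*q*N)*(1-b*q*N)/((1-q*N)*(1+q*N))"
    unfolding p_def preg_def by (simp add: rq_Suc N_def mult_ac)
  have t0: "tg (a*q) b q m i = T0"
    unfolding tg_def T0_def X_def Y_def D1_def D2_def Da_def Db_def N_def I_def
    by (simp add: mult_ac power2_eq_square)
  have t1: "tg (a*q) b q m (Suc i) = T0*(1-I/N)*(1+a*b*N*q^2*I)*q/(S*(1-a*q*q*I))"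
  proof -
    have "tg (a*q) b q m (Suc i) = X*(1 - I/N)*(Y*(1+a*b*N*q^2*I))*(q*I)/((D1*(1-q*I))*(Da*(1-a*q*q*I))*(Db*(1-b*q*I))*(D2*(1+q*I)))"
      unfolding tg_def X_def Y_def D1_def D2_def Da_def Db_def
      by (simp add: rq_Suc N_def I_def mult_ac power2_eq_square divide_inverse)
    then show ?thesis unfolding T0_def S_def using Dpos nz1 nz2 nz3 by (simp add: field_simps)
  qed
  have t2: "tg a b q m (Suc i) = T0*(1-I/N)*(1+a*b*N*q)*q/(S*(1-a*q))"
  proof -
    have e1: "rq (-(a*b*q^m*q)) q (Suc i) = (1+a*b*N*q)*Y"
      unfolding rq_Suc' Y_def N_def by (simp add: mult_ac power2_eq_square)
    have e2: "rq (a*q) q (Suc i) = (1-a*q)*Da"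
      unfolding rq_Suc' Da_def by simp
    have "tg a b q m (Suc i) = X*(1 - I/N)*((1+a*b*N*q)*Y)*(q*I)/((D1*(1-q*I))*((1-a*q)*Da)*(Db*(1-b*q*I))*(D2*(1+q*I)))"
      unfolding tg_def e1 e2 unfolding X_def D1_def D2_def Db_def
      by (simp add: rq_Suc N_def I_def mult_ac divide_inverse)
    then show ?thesis unfolding T0_def S_def using Dpos nz1 nz2 nz4 by (simp add: field_simps)
  qed
  have t3: "tg a b q (Suc m) (Suc i) = T0*(1-1/(q*N))*(1+a*b*N*q^2*I)*q/(S*(1-a*q))"
  proof -
    have e1: "rq (inverse (q^Suc m)) q (Suc i) = (1 - 1/(q*N))*X"
      unfolding rq_Suc' X_def N_def using q0 by (simp add: field_simps)
    have e2: "rq (a*q) q (Suc i) = (1-a*q)*Da"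
      unfolding rq_Suc' Da_def by simp
    have e3: "rq (-(a*b*q^Suc m*q)) q (Suc i) = Y*(1+a*b*N*q^2*I)"
      unfolding rq_Suc Y_def N_def I_def by (simp add: mult_ac power2_eq_square)
    have "tg a b q (Suc m) (Suc i) = ((1 - 1/(q*N))*X)*(Y*(1+a*b*N*q^2*I))*(q*I)/((D1*(1-q*I))*((1-a*q)*Da)*(Db*(1-b*q*I))*(D2*(1+q*I)))"
      unfolding tg_def e1 e2 e3 unfolding D1_def D2_def Db_def
      by (simp add: rq_Suc I_def mult_ac)
    then show ?thesis unfolding T0_def S_def using Dpos nz1 nz2 nz4 by (simp add: field_simps)
  qed
  define K where "K = p*T0*(1-a*q*N)/((1-a*q)*\<Delta>*N*S*I)"
  have f: "(1-a*q^(Suc i+1))*(1-a/q^(Suc i)) = (1-a*q*q*I)*(1-a/(q*I))" by (simp add: I_def mult_ac)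
  have lm: "lam a b q m = (1-a*q*N)*(1+a*q*N)*(1-a*b*q*N)/\<Delta>"
    unfolding lam_def \<Delta>_def N_def by (simp add: mult_ac power_mult_distrib)
  have mm: "mu a b q m = -a*(1-q*N)*(1+q*N)^2/\<Delta>"
    unfolding mu_def \<Delta>_def N_def by (simp add: mult_ac power_mult_distrib)
  have e1: "1-I/N = (N-I)/N" using N0 by (simp add: field_simps)
  have e2: "1-a/(q*I) = (q*I-a)/(q*I)" using I0 q0 by (simp add: field_simps)
  have e3: "1-1/(q*N) = (q*N-1)/(q*N)" using N0 q0 by (simp add: field_simps)
  have qn: "q \<noteq> 0" "N \<noteq> 0" "I \<noteq> 0" using q0 N0 I0 by auto
  have A1: "p*(1-a*q*N)/(1-a*q) * (T0*(1-I/N)*(1+a*b*N*q^2*I)*q/(S*(1-a*q*q*I))) * ((1-a*q*q*I)*(1-a/(q*I)))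
      = K*(\<Delta>*(N-I)*(1+a*b*N*q^2*I)*(q*I-a))"
    unfolding K_def e1 e2 using Sn nz3 nz4 nzD qn by (intro A1g)
  have A2: "p*(1-a*q*N)/(1-a*q) * T0 * (a/I) = K*(a*N*\<Delta>*S)"
    unfolding K_def using Sn nz4 nzD qn by (intro A2g)
  have A3: "(1-a*q*N)*(1+a*q*N)*(1-a*b*q*N)/\<Delta> * (p * (T0*(1-I/N)*(1+a*b*N*q)*q/(S*(1-a*q))))
      = K*((1+a*q*N)*(1-a*b*q*N)*(N-I)*(1+a*b*N*q)*q*I)"
    unfolding K_def e1 using Sn nz4 nzD qn by (intro A3g)
  have A4: "(-a*(1-q*N)*(1+q*N)^2/\<Delta>) * (p*(1-a*q*N)*(1-b*q*N)/((1-q*N)*(1+q*N)) * (T0*(1-1/(q*N))*(1+a*b*N*q^2*I)*q/(S*(1-a*q))))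
      = K*(- a*(1+q*N)*(1-b*q*N)*(q*N-1)*(1+a*b*N*q^2*I)*I)"
    unfolding K_def e3 using Sn nz1 nz4 nzD qn by (intro A4g)
  have "Cg (a*q) b q m (Suc i) * ((1-a*q^(Suc i+1))*(1-a/q^(Suc i))) + Cg (a*q) b q m i * (a/q^i)
     = K*(\<Delta>*(N-I)*(1+a*b*N*q^2*I)*(q*I-a)) + K*(a*N*\<Delta>*S)"
    unfolding Cg_def pa t1 t0 f A1[symmetric] A2[symmetric] by (simp add: I_def)
  also have "\<dots> = K*((1+a*q*N)*(1-a*b*q*N)*(N-I)*(1+a*b*N*q)*q*I) + K*(- a*(1+q*N)*(1-b*q*N)*(q*N-1)*(1+a*b*N*q^2*I)*I)"
    using core_poly[of a b q N I] unfolding \<Delta>_def S_def distrib_left[symmetric] by simp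
  also have "\<dots> = lam a b q m * Cg a b q m (Suc i) + mu a b q m * Cg a b q (Suc m) (Suc i)"
    unfolding Cg_def lm mm t2 t3 pS A3[symmetric] A4[symmetric] p_def ..
  finally show ?thesis .
qed

lemma preg_shift: assumes "1 - a*q \<noteq> 0"
  shows "preg (a*q) b q m = preg a b q m * (1-a*q*q^m)/(1-a*q)"
proof -
  have "rq (a*q) q (Suc m) = rq (a*q) q m * (1 - a*q*q^m)" by (simp add: rq_Suc)
  moreover have "rq (a*q) q (Suc m) = (1 - a*q) * rq (a*q*q) q m" by (rule rq_Suc')
  ultimately have "rq (a*q*q) q m = rq (a*q) q m * (1 - a*q*q^m) / (1-a*q)" using assms
    by (simp add: field_simps)
  then show ?thesis unfolding preg_def by (simp add: mult_ac)
qed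

lemma preg_Suc: "preg a b q (Suc m) = preg a b q m*(1-a*q*q^m)*(1-b*q*q^m)/((1-q*q^m)*(1+q*q^m))"
  unfolding preg_def by (simp add: rq_Suc mult_ac)

lemma zgen: fixes c h k p a w v z \<Delta> :: real
  assumes "w \<noteq> 0" "v \<noteq> 0" "\<Delta> \<noteq> 0"
  shows "p*c*(h*k + (-a*v*z))/\<Delta> = c*h*k/\<Delta>*p + (-a*w*v^2/\<Delta>)*(p*c*z/(w*v))"
  using assms by (simp add: field_simps power2_eq_square)

lemma coef_zero:
  assumes q0: "0 < q" and q1: "q < 1" and ha: "\<bar>a\<bar> * q < 1" and hb: "\<bar>b\<bar> * q < 1"
  shows "Cg (a*q) b q m 0 * ((1-a*q^(0+1))*(1-a/q^0)) = lam a b q m * Cg a b q m 0 + mu a b q m * Cg a b q (Suc m) 0"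
proof -
  define N where "N = q^m"
  define p where "p = preg a b q m"
  define \<Delta> where "\<Delta> = 1+a*b*q^2*N^2"
  have N0: "N > 0" "N \<le> 1" using q0 q1 by (auto simp: N_def power_le_one)
  have le: "q*N \<le> q" using N0 q0 by (auto simp: mult_left_le)
  have qN: "q*N < 1" "q*N > 0" using le q0 q1 N0 by (linarith, simp)
  have "a*q \<le> \<bar>a\<bar>*q" using q0 by (simp add: mult_right_mono)
  then have nz4: "1 - a*q \<noteq> 0" using ha by linarith
  have "\<bar>a*b*q^2*N^2\<bar> < 1"
  proof -
    have "\<bar>a*b*q^2*N^2\<bar> = (\<bar>a\<bar>*q)*(\<bar>b\<bar>*q)*N^2" using q0 by (simp add: abs_mult power2_eq_square)
    also have "\<dots> \<le> (\<bar>a\<bar>*q)*(\<bar>b\<bar>*q)"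
    proof (rule mult_left_le)
      show "N^2 \<le> 1" using N0 power_le_one[of N 2] by simp
      show "0 \<le> \<bar>a\<bar> * q * (\<bar>b\<bar> * q)" using q0 by simp
    qed
    also have "\<dots> < 1" using ha hb by (smt (verit) mult_le_one mult_nonneg_nonneg abs_ge_zero q0 mult_strict_mono)
    finally show ?thesis .
  qed
  then have nzD: "\<Delta> \<noteq> 0" unfolding \<Delta>_def by auto
  have lm: "lam a b q m = (1-a*q*N)*(1+a*q*N)*(1-a*b*q*N)/\<Delta>"
    unfolding lam_def \<Delta>_def N_def by (simp add: mult_ac power_mult_distrib)
  have mm: "mu a b q m = -a*(1-q*N)*(1+q*N)^2/\<Delta>"
    unfolding mu_def \<Delta>_def N_def by (simp add: mult_ac power_mult_distrib)
  have poly: "(1-a)*\<Delta> = (1+a*q*N)*(1-a*b*q*N) + (-a*(1+q*N)*(1-b*q*N))"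
    unfolding \<Delta>_def by algebra
  have w1: "1-q*N \<noteq> 0" "1+q*N \<noteq> 0" using qN by auto
  have "Cg (a*q) b q m 0 * ((1-a*q^(0+1))*(1-a/q^0)) = p*(1-a*q*N)/(1-a*q)*((1-a*q)*(1-a))"
    unfolding Cg_def tg_def preg_shift[OF nz4] p_def N_def by simp
  also have "\<dots> = p*(1-a*q*N)*(1-a)" using nz4 by simp
  also have "\<dots> = p*(1-a*q*N)*((1+a*q*N)*(1-a*b*q*N) + (-a*(1+q*N)*(1-b*q*N)))/\<Delta>"
    unfolding poly[symmetric] using nzD by simp
  also have "\<dots> = (1-a*q*N)*(1+a*q*N)*(1-a*b*q*N)/\<Delta> * p + (-a*(1-q*N)*(1+q*N)^2/\<Delta>) * (p*(1-a*q*N)*(1-b*q*N)/((1-q*N)*(1+q*N)))"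
    using w1 nzD by (rule zgen)
  also have "\<dots> = lam a b q m * Cg a b q m 0 + mu a b q m * Cg a b q (Suc m) 0"
    unfolding lm mm Cg_def tg_def preg_Suc p_def N_def by simp
  finally show ?thesis .
qed

lemma phi_Suc: assumes "0 < q"
  shows "qpoch_cos x q (Suc k) = qpoch_cos x q k * (1 - 2*x*of_real(q^k*sqrt q) + of_real(q^k*q^k*q))"
proof -
  have "q powr (real k + 1/2) = q^k*sqrt q" using assms by (simp add: powr_add powr_realpow powr_half_sqrt)
  moreover have "q powr (2*real k + 1) = q^k*q^k*q" using assms
  proof -
    have "2*real k + 1 = real (k+k+1)" by simp
    then have "q powr (2*real k + 1) = q^(k+k+1)" using assms by (simp only: powr_realpow)
    then show ?thesis by (simp add: power_add)
  qed
  ultimately show ?thesis by (simp add: qpoch_cos_def)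
qed

lemma phi_id: fixes x a s K :: complex assumes "K \<noteq> 0"
  shows "1 - 2*x*(a*s) + a^2*(s*s) = (a/K)*(1 - 2*x*(K*s) + K*K*(s*s)) + (1 - a*(K*(s*s)))*(1 - a/K)"
proof -
  have "(a/K)*(1 - 2*x*(K*s) + K*K*(s*s)) = a/K - 2*x*a*s + a*K*(s*s)" using assms by (simp add: field_simps)
  moreover have "(1 - a*(K*(s*s)))*(1 - a/K) = 1 - a/K - a*K*(s*s) + a^2*(s*s)" using assms by (simp add: field_simps power2_eq_square)
  ultimately show ?thesis by simp
qed

lemma mult_phi: assumes "0 < q"
  shows "(1 - 2*x*of_real(a*sqrt q) + of_real(a^2*q)) * qpoch_cos x q k
     = of_real(a/q^k) * qpoch_cos x q (Suc k) + of_real((1-a*q^(k+1))*(1-a/q^k)) * qpoch_cos x q k"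
proof -
  define K where "K = complex_of_real (q^k)"
  define s where "s = complex_of_real (sqrt q)"
  define A where "A = complex_of_real a"
  have sq: "complex_of_real q = s*s" unfolding s_def using assms by (simp flip: of_real_mult)
  have Kn: "K \<noteq> 0" using assms by (simp add: K_def)
  have c1: "complex_of_real(a*sqrt q) = A*s" by (simp add: A_def s_def)
  have c2: "complex_of_real(a^2*q) = A^2*(s*s)" by (simp add: A_def sq)
  have c3: "complex_of_real(q^k*sqrt q) = K*s" by (simp add: K_def s_def)
  have c4: "complex_of_real(q^k*q^k*q) = K*K*(s*s)" by (simp add: K_def sq)
  have c5: "complex_of_real(a/q^k) = A/K" by (simp add: A_def K_def)
  have c6: "complex_of_real((1-a*q^(k+1))*(1-a/q^k)) = (1 - A*(K*(s*s)))*(1 - A/K)"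
    by (simp add: A_def K_def sq)
  have F: "(1 - 2*x*of_real(a*sqrt q) + of_real(a^2*q)) = of_real(a/q^k)*(1 - 2*x*of_real(q^k*sqrt q) + of_real(q^k*q^k*q)) + of_real((1-a*q^(k+1))*(1-a/q^k))"
    unfolding c1 c2 c3 c4 c5 c6 by (rule phi_id[OF Kn])
  show ?thesis unfolding phi_Suc[OF assms] F by (simp add: algebra_simps)
qed

lemma shift:
  assumes q0: "0 < q" and q1: "q < 1" and ha: "\<bar>a\<bar> * q < 1" and hb: "\<bar>b\<bar> * q < 1"
  shows "(1 - 2*x*of_real(a*sqrt q) + of_real(a^2*q)) * Pg (a*q) b q m x
     = of_real(lam a b q m) * Pg a b q m x + of_real(mu a b q m) * Pg a b q (Suc m) x"
proof -
  define F where "F = (1 - 2*x*of_real(a*sqrt q) + of_real(a^2*q))"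
  define \<phi> where "\<phi> = qpoch_cos x q"
  define c where "c = Cg (a*q) b q m"
  define C0 where "C0 = Cg a b q m"
  define C1 where "C1 = Cg a b q (Suc m)"
  define f where "f k = (1-a*q^(k+1))*(1-a/q^k)" for k
  define g where "g k = a/q^k" for k
  define l where "l = lam a b q m"
  define u where "u = mu a b q m"
  have cz: "c (Suc m) = 0" unfolding c_def using q0 by (simp add: Cg_zero)
  have C0z: "C0 (Suc m) = 0" unfolding C0_def using q0 by (simp add: Cg_zero)
  have "F * Pg (a*q) b q m x = (\<Sum>k\<le>m. of_real (c k) * (F*\<phi> k))"
    unfolding Pg_def c_def \<phi>_def by (simp add: sum_distrib_left mult_ac)
  also have "\<dots> = (\<Sum>k\<le>m. of_real(c k * f k) * \<phi> k + of_real(c k * g k) * \<phi> (Suc k))"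
    unfolding F_def \<phi>_def f_def g_def mult_phi[OF q0] by (simp add: algebra_simps)
  also have "\<dots> = (\<Sum>k\<le>Suc m. of_real(c k * f k) * \<phi> k + of_real(c k * g k) * \<phi> (Suc k))"
    using cz by simp
  also have "\<dots> = (\<Sum>k\<le>Suc m. of_real(c k * f k) * \<phi> k) + (\<Sum>k\<le>Suc m. of_real(c k * g k) * \<phi> (Suc k))"
    by (rule sum.distrib)
  also have "\<dots> = of_real(c 0 * f 0)*\<phi> 0 + (\<Sum>i\<le>m. of_real(c (Suc i) * f (Suc i) + c i * g i) * \<phi> (Suc i))"
    unfolding sum.atMost_Suc_shift[of "\<lambda>k. of_real(c k * f k) * \<phi> k"] sum.atMost_Suc[of "\<lambda>k. of_real(c k * g k) * \<phi> (Suc k)"]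
    using cz by (simp add: sum.distrib algebra_simps)
  also have "\<dots> = of_real(l*C0 0 + u*C1 0)*\<phi> 0 + (\<Sum>i\<le>m. of_real(l*C0 (Suc i) + u*C1 (Suc i)) * \<phi> (Suc i))"
    using coef_zero[OF assms, of m] coef_step[OF assms, of m] unfolding c_def C0_def C1_def f_def g_def l_def u_def
    by simp
  also have "\<dots> = (\<Sum>k\<le>Suc m. of_real(l*C0 k + u*C1 k) * \<phi> k)"
    unfolding sum.atMost_Suc_shift[of "\<lambda>k. of_real(l*C0 k + u*C1 k) * \<phi> k"] ..
  also have "\<dots> = of_real l * (\<Sum>k\<le>Suc m. of_real(C0 k) * \<phi> k) + of_real u * (\<Sum>k\<le>Suc m. of_real(C1 k) * \<phi> k)"
    by (simp add: sum_distrib_left sum.distrib algebra_simps)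
  also have "\<dots> = of_real l * Pg a b q m x + of_real u * Pg a b q (Suc m) x"
    unfolding Pg_def C0_def C1_def \<phi>_def using C0z[unfolded C0_def] by simp
  finally show ?thesis unfolding F_def l_def u_def .
qed

lemma powr_lt1: fixes q y :: real assumes "0 < q" "q < 1" "0 < y" shows "q powr y < 1"
proof -
  have "ln q < 0" using assms by simp
  then have "y * ln q < 0" using assms by (simp add: mult_pos_neg)
  then show ?thesis using assms by (simp add: powr_def)
qed

lemma gen_c1: fixes X1 X2 X3 X4 X5 X6 D1 D2 :: real
  shows "X1*X2*X3*X4*X5*X6/(D1*D2) = (X4*X6*X2/D2)*(X5*X3*X1/D1)"
  by (simp add: field_simps)

lemma gen_c3: fixes A B q U V W Z D2 D3 :: real
  assumes "D2 \<noteq> 0" "D3 \<noteq> 0"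
  shows "V^2*Z^2*U*W/(D2*D3)*(A*B) = - ((B*U*V^2/D2) * (-A*W*Z^2/D3))"
  using assms by (simp add: field_simps)

lemma bracket_poly: fixes A B q T :: real
  shows "-A*((1+B*T)*(1-B*T))*(1-A*B*q^2*T^2) + B*((1-A*q*T)*(1+A*q*T))*(1-A*B*T^2) = (B-A)*(1+A*B*q*T^2)*(1-A*B*q*T^2)"
  by algebra

lemma gen_c2: fixes A B R G P1 P2 D1 D2 D3 E F :: real
  assumes "D1 \<noteq> 0" "D2 \<noteq> 0" "D3 \<noteq> 0" "B \<noteq> 0"
  and h: "-A*E*D3 + B*F*D1 = (B-A)*G*D2"
  shows "R*G*P2^2*P1*(1-A/B)/(D1*D3)*B
     = (E*R/D2) * (-A*P1*P2^2/D1) + (B*P1*P2^2/D2) * (F*R/D3)"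
proof -
  have "(E*R/D2) * (-A*P1*P2^2/D1) + (B*P1*P2^2/D2) * (F*R/D3)
      = P1*P2^2*R/(D1*D2*D3) * (-A*E*D3 + B*F*D1)"
    using assms(1-3) by (simp add: field_simps)
  also have "\<dots> = P1*P2^2*R/(D1*D2*D3) * ((B-A)*G*D2)" using h by simp
  also have "\<dots> = R*G*P2^2*P1*(1-A/B)/(D1*D3)*B" using assms(1-4) by (simp add: field_simps)
  finally show ?thesis ..
qed

theorem theorem2p1:
  fixes q \<alpha> \<beta> :: real and n :: nat and x :: complex
  assumes "0 < q" and "q < 1" and "\<alpha> > -1" and "\<beta> > -1" and "n \<ge> 1"
  shows "(1 - 2 * x * of_real (q powr (\<alpha> + 1/2)) + of_real (q powr (2*\<alpha> + 1)))
         * (1 + 2 * x * of_real (q powr (\<beta> + 1/2)) + of_real (q powr (2*\<beta> + 1)))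
         * qJacobiP (\<alpha> + 1) (\<beta> + 1) q (n - 1) x
       = of_real ((1 + q powr (\<alpha> + \<beta> + n)) * (1 + q powr (\<alpha> + \<beta> + n + 1))
                  * (1 + q powr (\<alpha> + n)) * (1 + q powr (\<beta> + n))
                  * (1 - q powr (\<alpha> + n)) * (1 - q powr (\<beta> + n))
                 / ((1 - q powr (2*n + \<alpha> + \<beta>)) * (1 - q powr (2*n + \<alpha> + \<beta> + 1))))
         * qJacobiP \<alpha> \<beta> q (n - 1) x
       + of_real ((1 + q powr (\<alpha> + \<beta> + n + 1)) * (1 + q powr (\<alpha> + \<beta> + 2*n + 1))
                  * (1 + q ^ n)^2 * (1 - q ^ n) * (1 - q powr (\<alpha> - \<beta>))
                 / ((1 - q powr (2*n + \<alpha> + \<beta>)) * (1 - q powr (2*n + \<alpha> + \<beta> + 2)))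
                 * q powr \<beta>)
         * qJacobiP \<alpha> \<beta> q n x
       - of_real ((1 + q ^ n)^2 * (1 + q ^ (n + 1))^2 * (1 - q ^ n) * (1 - q ^ (n + 1))
                 / ((1 - q powr (2*n + \<alpha> + \<beta> + 1)) * (1 - q powr (2*n + \<alpha> + \<beta> + 2)))
                 * q powr (\<alpha> + \<beta>))
         * qJacobiP \<alpha> \<beta> q (n + 1) x"
proof -
  obtain m where n: "n = Suc m" using assms(5) by (cases n) auto
  have q0: "0 < q" and q1: "q < 1" using assms by auto
  define A where "A = q powr \<alpha>"
  define B where "B = q powr \<beta>"
  define T where "T = q ^ n"
  have A0: "A > 0" and B0: "B > 0" and T0: "T > 0" using q0 by (auto simp: A_def B_def T_def)
  have Aq: "A*q < 1"
  proof -
    have "A*q = q powr (\<alpha>+1)" using q0 by (simp add: A_def powr_add)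
    also have "\<dots> < 1" using q0 q1 assms(3) by (intro powr_lt1) auto
    finally show ?thesis .
  qed
  have Bq: "B*q < 1"
  proof -
    have "B*q = q powr (\<beta>+1)" using q0 by (simp add: B_def powr_add)
    also have "\<dots> < 1" using q0 q1 assms(4) by (intro powr_lt1) auto
    finally show ?thesis .
  qed
  have Aqq: "A*q*q < 1"
  proof -
    have "A*q*q \<le> A*q" using q1 A0 q0 by (simp add: mult_left_le)
    then show ?thesis using Aq by linarith
  qed
  have ha: "\<bar>A\<bar>*q < 1" using A0 Aq by simp
  have hb: "\<bar>-B\<bar>*q < 1" using B0 Bq by simp
  have haq: "\<bar>A*q\<bar>*q < 1" using A0 q0 Aqq by simp
  have qn2: "q powr (real (2*n)) = T^2"
  proof -
    have "real (2*n) = real (n*2)" by simp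
    then show ?thesis using q0 by (simp only: powr_realpow T_def power_mult)
  qed
  have qn: "q powr (real n) = T" using q0 unfolding T_def by (rule powr_realpow)
  have q1': "q powr 1 = q" using q0 by (simp add: powr_one)
  have q2': "q powr 2 = q^2" using q0 by simp
  have qh: "q powr (1/2) = sqrt q" using q0 by (simp add: powr_half_sqrt)
  have Ar: "q powr \<alpha> = A" and Br: "q powr \<beta> = B" by (simp_all add: A_def B_def)
  have p1: "q powr (\<alpha>+1/2) = A*sqrt q" unfolding powr_add Ar qh ..
  have p2: "q powr (2*\<alpha>+1) = A^2*q"
    unfolding mult_2 powr_add Ar q1' by (simp add: power2_eq_square)
  have p3: "q powr (\<beta>+1/2) = B*sqrt q" unfolding powr_add Br qh ..
  have p4: "q powr (2*\<beta>+1) = B^2*q"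
    unfolding mult_2 powr_add Br q1' by (simp add: power2_eq_square)
  have p5: "q powr (\<alpha>+\<beta>+real n) = A*B*T" unfolding powr_add Ar Br qn ..
  have p6: "q powr (\<alpha>+\<beta>+real n+1) = A*B*T*q" unfolding powr_add Ar Br qn q1' ..
  have p7: "q powr (\<alpha>+real n) = A*T" unfolding powr_add Ar qn ..
  have p8: "q powr (\<beta>+real n) = B*T" unfolding powr_add Br qn ..
  have p9: "q powr (real (2*n)+\<alpha>+\<beta>) = A*B*T^2" unfolding powr_add Ar Br qn2 by (simp only: mult_ac)
  have p10: "q powr (real (2*n)+\<alpha>+\<beta>+1) = A*B*T^2*q" unfolding powr_add Ar Br qn2 q1' by (simp only: mult_ac)
  have p11: "q powr (real (2*n)+\<alpha>+\<beta>+2) = A*B*T^2*q^2" unfolding powr_add Ar Br qn2 q2' by (simp only: mult_ac)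
  have p12: "q powr (\<alpha>+\<beta>+real (2*n)+1) = A*B*T^2*q" unfolding powr_add Ar Br qn2 q1' by (simp only: mult_ac)
  have p13: "q powr (\<alpha>-\<beta>) = A/B" unfolding powr_diff Ar Br ..
  have p14: "q powr (\<alpha>+\<beta>) = A*B" unfolding powr_add Ar Br ..
  have p15: "q^(n+1) = T*q" by (simp add: T_def)
  have Tm: "q^(m+1) = T" "q^(Suc m+1) = T*q" by (simp_all add: T_def n)
  define lG where "lG = lam (-B) (A*q) q m"
  define uG where "uG = mu (-B) (A*q) q m"
  define l1 where "l1 = lam A (-B) q m"
  define u1 where "u1 = mu A (-B) q m"
  define l2 where "l2 = lam A (-B) q (Suc m)"
  define u2 where "u2 = mu A (-B) q (Suc m)"
  have lGf: "lG = (1+B*T)*(1-B*T)*(1+A*B*T*q)/(1-A*B*T^2*q)"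
    unfolding lG_def lam_def Tm by (simp add: mult_ac power_mult_distrib)
  have uGf: "uG = B*(1-T)*(1+T)^2/(1-A*B*T^2*q)"
    unfolding uG_def mu_def Tm by (simp add: mult_ac power_mult_distrib)
  have l1f: "l1 = (1-A*T)*(1+A*T)*(1+A*B*T)/(1-A*B*T^2)"
    unfolding l1_def lam_def Tm by (simp add: mult_ac power_mult_distrib)
  have u1f: "u1 = -A*(1-T)*(1+T)^2/(1-A*B*T^2)"
    unfolding u1_def mu_def Tm by (simp add: mult_ac power_mult_distrib)
  have l2f: "l2 = (1-A*T*q)*(1+A*T*q)*(1+A*B*T*q)/(1-A*B*T^2*q^2)"
    unfolding l2_def lam_def Tm by (simp add: mult_ac power_mult_distrib)
  have u2f: "u2 = -A*(1-T*q)*(1+T*q)^2/(1-A*B*T^2*q^2)"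
    unfolding u2_def mu_def Tm by (simp add: mult_ac power_mult_distrib)
  have D1: "1 - A*B*T^2 \<noteq> 0"
  proof -
    have "q powr (real (2*n)+\<alpha>+\<beta>) < 1" using q0 q1 assms(3,4,5) by (intro powr_lt1) auto
    then show ?thesis using p9 by auto
  qed
  have D2: "1 - A*B*T^2*q \<noteq> 0"
  proof -
    have "q powr (real (2*n)+\<alpha>+\<beta>+1) < 1" using q0 q1 assms(3,4,5) by (intro powr_lt1) auto
    then show ?thesis using p10 by auto
  qed
  have D3: "1 - A*B*T^2*q^2 \<noteq> 0"
  proof -
    have "q powr (real (2*n)+\<alpha>+\<beta>+2) < 1" using q0 q1 assms(3,4,5) by (intro powr_lt1) auto
    then show ?thesis using p11 by auto
  qed
  have E1: "(1 + A*B*T) * (1 + A*B*T*q) * (1 + A*T) * (1 + B*T) * (1 - A*T) * (1 - B*T) / ((1 - A*B*T^2) * (1 - A*B*T^2*q)) = lG*l1"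
    unfolding lGf l1f by (rule gen_c1)
  have E3: "(1+T)^2*(1+T*q)^2*(1-T)*(1-T*q)/((1-A*B*T^2*q)*(1-A*B*T^2*q^2))*(A*B) = -(uG*u2)"
    unfolding uGf u2f using D2 D3 by (rule gen_c3)
  have hpoly: "-A*((1+B*T)*(1-B*T))*(1-A*B*T^2*q^2) + B*((1-A*T*q)*(1+A*T*q))*(1-A*B*T^2) = (B-A)*(1+A*B*T^2*q)*(1-A*B*T^2*q)"
    by algebra
  have E2: "(1 + A*B*T*q) * (1 + A*B*T^2*q) * (1 + T)^2 * (1 - T) * (1 - A/B) / ((1 - A*B*T^2) * (1 - A*B*T^2*q^2)) * B = lG*u1 + uG*l2"
    unfolding lGf u1f uGf l2f using D1 D2 D3 B0 hpoly by (intro gen_c2) auto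
  have J: "\<And>k. qJacobiP \<alpha> \<beta> q k x = Pg A (-B) q k x" using qJacobiP_Pg[OF q0] by (simp add: A_def B_def)
  have J': "qJacobiP (\<alpha>+1) (\<beta>+1) q m x = Pg (A*q) ((-B)*q) q m x"
  proof -
    have "q powr (\<alpha>+1) = A*q" "-(q powr (\<beta>+1)) = (-B)*q" unfolding powr_add Ar Br q1' by simp_all
    then show ?thesis using qJacobiP_Pg[OF q0, of "\<alpha>+1" "\<beta>+1" m x] by simp
  qed
  have F2eq: "(1 + 2*x*of_real(B*sqrt q) + of_real(B^2*q)) = (1 - 2*x*of_real((-B)*sqrt q) + of_real((-B)^2*q))"
    by simp
  have G: "(1 - 2*x*of_real((-B)*sqrt q) + of_real((-B)^2*q)) * Pg (A*q) ((-B)*q) q m x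
      = of_real lG * Pg (A*q) (-B) q m x + of_real uG * Pg (A*q) (-B) q (Suc m) x"
    using shift[OF q0 q1 hb haq, of x m] unfolding lG_def uG_def
    by (simp only: Pg_sym[of "(-B)*q" "A*q"] Pg_sym[of "-B" "A*q"])
  have H: "\<And>k. (1 - 2*x*of_real(A*sqrt q) + of_real(A^2*q)) * Pg (A*q) (-B) q k x
      = of_real(lam A (-B) q k)*Pg A (-B) q k x + of_real(mu A (-B) q k)*Pg A (-B) q (Suc k) x"
    using shift[OF q0 q1 ha hb] by simp
  have nm: "n - 1 = m" "n + 1 = Suc (Suc m)" by (simp_all add: n)
  have p16: "q ^ Suc (Suc m) = T*q" by (simp add: T_def n)
  have nP: "Pg A (-B) q n x = Pg A (-B) q (Suc m) x" by (simp add: n)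
  define F1 where "F1 = (1 - 2*x*of_real(A*sqrt q) + of_real(A^2*q))"
  define F2 where "F2 = (1 - 2*x*of_real((-B)*sqrt q) + of_real((-B)^2*q))"
  define P where "P k = Pg A (-B) q k x" for k
  have "F1 * F2 * Pg (A*q) ((-B)*q) q m x = F1 * (of_real lG * Pg (A*q) (-B) q m x + of_real uG * Pg (A*q) (-B) q (Suc m) x)"
    using G unfolding F2_def by (simp add: mult.assoc)
  also have "\<dots> = of_real lG * (F1 * Pg (A*q) (-B) q m x) + of_real uG * (F1 * Pg (A*q) (-B) q (Suc m) x)"
    by (simp add: algebra_simps)
  also have "\<dots> = of_real lG * (of_real l1 * P m + of_real u1 * P (Suc m)) + of_real uG * (of_real l2 * P (Suc m) + of_real u2 * P (Suc (Suc m)))"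
    unfolding F1_def H P_def l1_def u1_def l2_def u2_def ..
  also have "\<dots> = of_real (lG*l1) * P m + of_real (lG*u1 + uG*l2) * P (Suc m) - of_real (-(uG*u2)) * P (Suc (Suc m))"
    by (simp add: algebra_simps)
  finally have main: "F1 * F2 * Pg (A*q) ((-B)*q) q m x = of_real (lG*l1) * P m + of_real (lG*u1 + uG*l2) * P (Suc m) - of_real (-(uG*u2)) * P (Suc (Suc m))" .
  show ?thesis
    unfolding p1 p2 p3 p4 p5 p6 p7 p8 p9 p10 p11 p12 p13 p14 p15 Ar Br T_def[symmetric] nm J' J nP p16
    unfolding F2eq E1 E2 E3
    using main unfolding F1_def F2_def P_def .
qed

end
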